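(* Let $X\subset A^+$ be a thin maximal bifix code and let $x\in A^{\mathbb N}$ be an $X$-stable infinite word. If $\mathrm{Card}(X\cap F(x))\le d_{F(x)}(X)$, then $x$ is ultimately periodic.
   Context: $A$ is a finite alphabet. A bifix code is a set of nonempty words none of which is a proper prefix or proper suffix of another; a maximal bifix code is one not properly contained in another bifix code of $A^*$; it is thin if some word of $A^*$ is not a factor of any of its words. For an infinite word $y$, $F(y)$ is its set of finite factors. A parse of $w$ with respect to $X$ is a triple $(v,z,u)$ with $w=vzu$, $v$ having no suffix in $X$, $z\in X^*$, $u$ having no prefix in $X$; $\delta_X(w)$ is their number, and $d_{F(y)}(X)=\max_{w\in F(y)}\delta_X(w)$. An infinite word $x$ is $X$-stable if $d_{F(y)}(X)=d_{F(x)}(X)$ for every suffix $y$ of $x$ (i.e. every $y$ with $x=uy$, $u\in A^*$). $x=a_0a_1\cdots$ is ultimately periodic if there is $n\ge1$ with $a_{i+n}=a_i$ for all sufficiently large $i$. *)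

theory Defs
  imports Main "HOL-Library.Sublist" "HOL-Library.Extended_Nat"
begin

definition bifix_code :: "'a set \<Rightarrow> 'a list set \<Rightarrow> bool" where
  "bifix_code A X \<longleftrightarrow> X \<subseteq> lists A \<and> [] \<notin> X \<and>
     (\<forall>x\<in>X. \<forall>y\<in>X. \<not> strict_prefix x y \<and> \<not> strict_suffix x y)"

definition maximal_bifix_code :: "'a set \<Rightarrow> 'a list set \<Rightarrow> bool" where
  "maximal_bifix_code A X \<longleftrightarrow> bifix_code A X \<and>
     (\<forall>Y. bifix_code A Y \<and> X \<subseteq> Y \<longrightarrow> Y = X)"

definition thin :: "'a set \<Rightarrow> 'a list set \<Rightarrow> bool" where
  "thin A X \<longleftrightarrow> (\<exists>w\<in>lists A. \<forall>x\<in>X. \<not> sublist w x)"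

definition star_words :: "'a list set \<Rightarrow> 'a list set" where
  "star_words X = {concat ws | ws. set ws \<subseteq> X}"

definition factors :: "(nat \<Rightarrow> 'a) \<Rightarrow> 'a list set" where
  "factors y = {map y [i..<i+n] | i n. True}"

definition parses :: "'a list set \<Rightarrow> 'a list \<Rightarrow> ('a list \<times> 'a list \<times> 'a list) set" where
  "parses X w = {(v, z, u). w = v @ z @ u \<and> (\<forall>s. suffix s v \<longrightarrow> s \<notin> X)
      \<and> z \<in> star_words X \<and> (\<forall>p. prefix p u \<longrightarrow> p \<notin> X)}"

definition delta :: "'a list set \<Rightarrow> 'a list \<Rightarrow> nat" where
  "delta X w = card (parses X w)"

text \<open>d_{F(y)}(X) as a supremum in the extended naturals (max when attained).\<close>
definition degF :: "'a list set \<Rightarrow> (nat \<Rightarrow> 'a) \<Rightarrow> enat" where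
  "degF X y = (SUP w\<in>factors y. enat (delta X w))"

definition ecard :: "'b set \<Rightarrow> enat" where
  "ecard S = (if finite S then enat (card S) else \<infinity>)"

definition X_stable :: "'a list set \<Rightarrow> (nat \<Rightarrow> 'a) \<Rightarrow> bool" where
  "X_stable X x \<longleftrightarrow> (\<forall>k. degF X (\<lambda>i. x (i + k)) = degF X x)"

definition ultimately_periodic :: "(nat \<Rightarrow> 'a) \<Rightarrow> bool" where
  "ultimately_periodic x \<longleftrightarrow> (\<exists>n\<ge>1. \<exists>N. \<forall>i\<ge>N. x (i + n) = x i)"

end

theory Submission
  imports Defs
begin


lemma sublist_trans': "sublist a b \<Longrightarrow> sublist b c \<Longrightarrow> sublist a c"
  unfolding sublist_def by (metis append.assoc)

lemma bifix_prefix_eq: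
  assumes "bifix_code A X" "u \<in> X" "v \<in> X" "prefix u v" shows "u = v"
  using assms unfolding bifix_code_def strict_prefix_def by auto

lemma bifix_suffix_eq:
  assumes "bifix_code A X" "u \<in> X" "v \<in> X" "suffix u v" shows "u = v"
  using assms unfolding bifix_code_def strict_suffix_def by auto

lemma max_bifix_aux:
  assumes mb: "maximal_bifix_code A X" and y: "y \<in> lists A" "y \<noteq> []"
    and np: "\<forall>p. prefix p y \<longrightarrow> p \<notin> X" and ns: "\<forall>s. suffix s y \<longrightarrow> s \<notin> X"
    and nc: "\<forall>z\<in>X. \<not> prefix y z \<and> \<not> suffix y z"
  shows False
proof -
  have bc: "bifix_code A X" using mb by (simp add: maximal_bifix_code_def)
  have "bifix_code A (insert y X)"
    using bc y np ns nc unfolding bifix_code_def strict_prefix_def strict_suffix_def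
    by auto
  moreover have "X \<subseteq> insert y X" by auto
  ultimately have "insert y X = X" using mb unfolding maximal_bifix_code_def by blast
  then have "y \<in> X" by auto
  then show False using np by auto
qed

lemma maxlem2:
  assumes mb: "maximal_bifix_code A X" and wnf: "\<forall>z\<in>X. \<not> sublist w z" and wne: "w \<noteq> []"
    and y: "y \<in> lists A" and sw: "sublist w y"
  shows "(\<exists>p. prefix p y \<and> p \<in> X) \<or> (\<exists>s. suffix s y \<and> s \<in> X)"
proof (rule ccontr)
  assume c: "\<not> ?thesis"
  have "y \<noteq> []" using sw wne by auto
  moreover have "\<forall>z\<in>X. \<not> prefix y z \<and> \<not> suffix y z"
    using wnf sw sublist_trans' prefix_imp_sublist suffix_imp_sublist by blast
  ultimately show False using max_bifix_aux[OF mb y] c by blast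
qed



lemma no_suffix_app:
  assumes wnf: "\<forall>z\<in>X. \<not> sublist w z" and sw: "sublist w v"
    and nsv: "\<forall>s. suffix s v \<longrightarrow> s \<notin> X"
  shows "suffix s (P @ v) \<Longrightarrow> s \<notin> X"
proof
  assume "suffix s (P @ v)" "s \<in> X"
  then consider "suffix s v" | s' where "s = s' @ v"
    unfolding suffix_append by blast
  then show False
  proof cases
    case 1 then show ?thesis using nsv \<open>s \<in> X\<close> by auto
  next
    case 2
    then have "sublist w s" using sw sublist_trans' by (metis sublist_append_leftI)
    then show ?thesis using wnf \<open>s \<in> X\<close> by auto
  qed
qed

lemma take_concat_replicate:
  assumes "k \<le> N" shows "take (k * length v) (concat (replicate N v)) = concat (replicate k v)"
proof -
  have "concat (replicate N v) = concat (replicate k v) @ concat (replicate (N - k) v)"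
    using assms by (metis concat_append le_add_diff_inverse replicate_add)
  moreover have "length (concat (replicate k v)) = k * length v"
    by (simp add: length_concat sum_list_replicate)
  ultimately show ?thesis by simp
qed

lemma concat_rep_Suc: "concat (replicate (Suc k) v) = concat (replicate k v) @ v"
  by (induct k) auto

lemma KEY:
  assumes mb: "maximal_bifix_code A X" and wnf: "\<forall>z\<in>X. \<not> sublist w z" and wne: "w \<noteq> []"
    and vA: "v \<in> lists A" and sw: "sublist w v"
  shows "\<exists>s. suffix s v \<and> s \<in> X"
proof (rule ccontr)
  assume "\<not> ?thesis"
  then have nsv: "\<forall>s. suffix s v \<longrightarrow> s \<notin> X" by auto
  have bc: "bifix_code A X" using mb by (simp add: maximal_bifix_code_def)
  define n where "n = length v"
  have npos: "n > 0" using sw wne n_def by (metis length_greater_0_conv sublist_Nil_right)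
  define N where "N = Suc n"
  define Pre where "Pre = concat (replicate n v)"
  define Y where "Y = Pre @ v"
  have YN: "Y = concat (replicate N v)" unfolding Y_def Pre_def N_def
    by (simp add: replicate_append_same[symmetric])
  have lPre: "length Pre = n * n" unfolding Pre_def n_def
    by (simp add: length_concat sum_list_replicate)
  have lY: "length Y = N * n" unfolding Y_def N_def using lPre by (simp add: n_def)
  have YA: "Y \<in> lists A" unfolding YN using vA by (induct N) auto
  have ex: "\<exists>t. 0 < t \<and> i + t < N * n \<and> take t (drop i Y) \<in> X" if i: "i \<le> n * n" for i
  proof -
    have d: "drop i Y = drop i Pre @ v" unfolding Y_def using i lPre by simp
    have dA: "drop i Y \<in> lists A" using YA by (auto simp: in_lists_conv_set dest: in_set_dropD)
    have "sublist w (drop i Y)" unfolding d using sw sublist_trans' by (metis sublist_append_leftI)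
    then have "(\<exists>p. prefix p (drop i Y) \<and> p \<in> X) \<or> (\<exists>s. suffix s (drop i Y) \<and> s \<in> X)"
      using maxlem2[OF mb wnf wne dA] by blast
    moreover have "\<not> (\<exists>s. suffix s (drop i Y) \<and> s \<in> X)"
      unfolding d using no_suffix_app[OF wnf sw nsv] by blast
    ultimately obtain p where p: "prefix p (drop i Y)" "p \<in> X" by blast
    have "p \<noteq> drop i Y" using p \<open>\<not> (\<exists>s. suffix s (drop i Y) \<and> s \<in> X)\<close> by auto
    then have "length p < length (drop i Y)" using p(1)
      by (metis prefix_length_less strict_prefixI)
    moreover have "p \<noteq> []" using p(2) bc unfolding bifix_code_def by auto
    moreover have "p = take (length p) (drop i Y)" using p(1) by (metis append_eq_conv_conj prefixE)
    ultimately show ?thesis using lY i p(2) by (intro exI[of _ "length p"]) auto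
  qed
  then obtain f where f: "\<And>i. i \<le> n * n \<Longrightarrow> 0 < f i \<and> i + f i < N * n \<and> take (f i) (drop i Y) \<in> X"
    by metis
  define e where "e i = i + f i" for i
  have sfx: "suffix (take (f i) (drop i Y)) (take (e i) Y)" if "i \<le> n * n" for i
  proof -
    have "take (e i) Y = take i Y @ take (f i) (drop i Y)" unfolding e_def
      by (simp add: take_add)
    then show ?thesis by (simp add: suffix_def)
  qed
  have inj: "inj_on e {0..n*n}"
  proof (rule inj_onI)
    fix i j assume i: "i \<in> {0..n*n}" and j: "j \<in> {0..n*n}" and eq: "e i = e j"
    have s1: "suffix (take (f i) (drop i Y)) (take (e i) Y)" using sfx i by auto
    have s2: "suffix (take (f j) (drop j Y)) (take (e i) Y)" using sfx j eq by auto
    have ai: "take (f i) (drop i Y) \<in> X" using f[of i] i by auto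
    have aj: "take (f j) (drop j Y) \<in> X" using f[of j] j by auto
    have "take (f i) (drop i Y) = take (f j) (drop j Y)"
      using suffix_same_cases[OF s1 s2] bifix_suffix_eq[OF bc ai aj] bifix_suffix_eq[OF bc aj ai] by auto
    moreover have "length (take (f i) (drop i Y)) = f i" using f[of i] i lY by auto
    moreover have "length (take (f j) (drop j Y)) = f j" using f[of j] j lY by auto
    ultimately have "f i = f j" by simp
    then show "i = j" using eq unfolding e_def by simp
  qed
  have rng: "e ` {0..n*n} \<subseteq> {1..<N*n} - (\<lambda>k. k * n) ` {1..<N}"
  proof
    fix y assume "y \<in> e ` {0..n*n}"
    then obtain i where i: "i \<le> n * n" and y: "y = e i" by auto
    have r: "1 \<le> y" "y < N * n" using f[OF i] y unfolding e_def by auto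
    have "y \<notin> (\<lambda>k. k * n) ` {1..<N}"
    proof
      assume "y \<in> (\<lambda>k. k * n) ` {1..<N}"
      then obtain k0 where k0: "k0 \<in> {1..<N}" "y = k0 * n" by blast
      then have k: "k0 \<le> N" "y = k0 * n" by auto
      have "take (e i) Y = concat (replicate k0 v)" using take_concat_replicate[OF k(1), of v]
        YN k y n_def by simp
      moreover have "k0 \<noteq> 0" using k r by auto
      ultimately have "take (e i) Y = concat (replicate (k0 - 1) v) @ v"
        using concat_rep_Suc[of "k0 - 1" v] by simp
      then show False using sfx[OF i] f[OF i] no_suffix_app[OF wnf sw nsv] by metis
    qed
    then show "y \<in> {1..<N*n} - (\<lambda>k. k * n) ` {1..<N}" using r by auto
  qed
  have "card {0..n*n} \<le> card ({1..<N*n} - (\<lambda>k. k * n) ` {1..<N})"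
    using card_inj_on_le[OF inj rng] by simp
  moreover have "card ((\<lambda>k. k * n) ` {1..<N}) = n"
    using card_image[of "\<lambda>k. k * n" "{1..<N}"] npos unfolding N_def by (simp add: inj_on_def)
  moreover have "(\<lambda>k. k * n) ` {1..<N} \<subseteq> {1..<N*n}" using npos by auto
  ultimately have "n * n + 1 \<le> N * n - 1 - n"
    by (simp add: card_Diff_subset)
  then show False unfolding N_def using npos by simp
qed



definition noin :: "'a list set \<Rightarrow> 'a list \<Rightarrow> nat set" where
  "noin X y = {p. p \<le> length y \<and> \<not> (\<exists>j<p. drop j (take p y) \<in> X)}"

definition noout :: "'a list set \<Rightarrow> 'a list \<Rightarrow> nat set" where
  "noout X y = {q. q \<le> length y \<and> \<not> (\<exists>t. q < t \<and> t \<le> length y \<and> drop q (take t y) \<in> X)}"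

lemma prefix_drop_mono: "prefix a b \<Longrightarrow> j \<le> length a \<Longrightarrow> prefix (drop j a) (drop j b)"
  by (auto simp: prefix_def)

lemma suffix_drop_drop: "j \<le> j' \<Longrightarrow> suffix (drop j' z) (drop j z)"
proof -
  assume "j \<le> j'"
  then have "drop j' z = drop (j' - j) (drop j z)" by simp
  then show ?thesis by (metis suffix_drop)
qed

lemma suffix_drop_eq: "suffix s z \<Longrightarrow> drop (length z - length s) z = s"
  by (auto simp: suffix_def)

lemma EQ:
  assumes bc: "bifix_code A X"
  shows "card (noin X y) = card (noout X y)"
proof -
  define L where "L = length y"
  define Arc where "Arc = {(j,t). j < t \<and> t \<le> L \<and> drop j (take t y) \<in> X}"
  have finA: "finite Arc"
    by (rule finite_subset[of _ "{0..L} \<times> {0..L}"]) (auto simp: Arc_def)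
  have i1: "inj_on snd Arc"
  proof (rule inj_onI)
    fix a b assume a: "a \<in> Arc" and b: "b \<in> Arc" and e: "snd a = snd b"
    obtain j t where a': "a = (j,t)" by (cases a)
    obtain j' t' where b': "b = (j',t')" by (cases b)
    have t: "t' = t" using e a' b' by simp
    have X1: "drop j (take t y) \<in> X" and X2: "drop j' (take t y) \<in> X"
      using a b a' b' t by (auto simp: Arc_def)
    have "drop j (take t y) = drop j' (take t y)"
    proof (cases "j \<le> j'")
      case True then show ?thesis using bifix_suffix_eq[OF bc X2 X1] suffix_drop_drop by metis
    next
      case False then show ?thesis using bifix_suffix_eq[OF bc X1 X2] suffix_drop_drop
        by (metis nat_le_linear)
    qed
    then have "length (drop j (take t y)) = length (drop j' (take t y))" by simp
    then have "j = j'" using a b a' b' t by (auto simp: Arc_def L_def)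
    then show "a = b" using a' b' t by simp
  qed
  have i2: "inj_on fst Arc"
  proof (rule inj_onI)
    fix a b assume a: "a \<in> Arc" and b: "b \<in> Arc" and e: "fst a = fst b"
    obtain j t where a': "a = (j,t)" by (cases a)
    obtain j' t' where b': "b = (j',t')" by (cases b)
    have jj: "j' = j" using e a' b' by simp
    have X1: "drop j (take t y) \<in> X" and X2: "drop j (take t' y) \<in> X"
      and r: "j < t" "t \<le> L" "j < t'" "t' \<le> L"
      using a b a' b' jj by (auto simp: Arc_def)
    have pre: "prefix (drop j (take t1 y)) (drop j (take t2 y))" if "t1 \<le> t2" "j < t1" "t2 \<le> L" for t1 t2
    proof -
      have "prefix (take t1 y) (take t2 y)" using that
        by (metis min.absorb1 take_is_prefix take_take)
      moreover have "j \<le> length (take t1 y)" using that by (auto simp: L_def)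
      ultimately show ?thesis by (rule prefix_drop_mono)
    qed
    have "drop j (take t y) = drop j (take t' y)"
    proof (cases "t \<le> t'")
      case True then show ?thesis using bifix_prefix_eq[OF bc X1 X2] pre[of t t'] r by blast
    next
      case False then show ?thesis using bifix_prefix_eq[OF bc X2 X1] pre[of t' t] r by simp
    qed
    then have "length (drop j (take t y)) = length (drop j (take t' y))" by simp
    then have "t = t'" using r by (auto simp: L_def)
    then show "a = b" using a' b' jj by simp
  qed
  have n1: "noin X y = {0..L} - snd ` Arc"
    by (auto simp: noin_def Arc_def L_def image_iff)
  have n2: "noout X y = {0..L} - fst ` Arc"
    by (auto simp: noout_def Arc_def L_def image_iff)
  have s1: "snd ` Arc \<subseteq> {0..L}" and s2: "fst ` Arc \<subseteq> {0..L}" by (auto simp: Arc_def)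
  have "card (noin X y) = card {0..L} - card Arc"
    unfolding n1 using card_Diff_subset[OF finite_imageI[OF finA] s1] card_image[OF i1] by simp
  moreover have "card (noout X y) = card {0..L} - card Arc"
    unfolding n2 using card_Diff_subset[OF finite_imageI[OF finA] s2] card_image[OF i2] by simp
  ultimately show ?thesis by simp
qed

lemma noXpref_unique:
  assumes bc: "bifix_code A X"
  shows "set ws1 \<subseteq> X \<Longrightarrow> set ws2 \<subseteq> X \<Longrightarrow> concat ws1 @ u1 = concat ws2 @ u2
    \<Longrightarrow> (\<forall>p. prefix p u1 \<longrightarrow> p \<notin> X) \<Longrightarrow> (\<forall>p. prefix p u2 \<longrightarrow> p \<notin> X)
    \<Longrightarrow> concat ws1 = concat ws2"
proof (induction ws1 arbitrary: ws2)
  case Nil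
  show ?case
  proof (cases ws2)
    case Nil then show ?thesis by simp
  next
    case (Cons b ws2')
    then have "prefix b u1" using Nil.prems(3) by (simp add: prefix_def)
    then show ?thesis using Nil.prems Cons by auto
  qed
next
  case (Cons a ws1)
  show ?case
  proof (cases ws2)
    case Nil
    then have "u2 = a @ (concat ws1 @ u1)" using Cons.prems(3) by simp
    then have "prefix a u2" by (rule prefixI)
    then show ?thesis using Cons.prems Nil by auto
  next
    case (Cons b ws2')
    have aX: "a \<in> X" and bX: "b \<in> X" using Cons Cons.prems by auto
    have e: "a @ (concat ws1 @ u1) = b @ (concat ws2' @ u2)" using Cons.prems(3) Cons by simp
    have "prefix a (a @ (concat ws1 @ u1))" "prefix b (a @ (concat ws1 @ u1))"
      using e by (auto simp: prefix_def) (metis)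
    then have "prefix a b \<or> prefix b a" by (rule prefix_same_cases)
    then have ab: "a = b" using bifix_prefix_eq[OF bc aX bX] bifix_prefix_eq[OF bc bX aX] by auto
    then have "concat ws1 @ u1 = concat ws2' @ u2" using e by simp
    then have "concat ws1 = concat ws2'" using Cons.IH[of ws2'] Cons.prems Cons by auto
    then show ?thesis using ab Cons by simp
  qed
qed

lemma delta_le_noin:
  assumes bc: "bifix_code A X"
  shows "delta X y \<le> card (noin X y)"
proof -
  let ?f = "\<lambda>(v::'a list, z::'a list, u::'a list). length v"
  have inj: "inj_on ?f (parses X y)"
  proof (rule inj_onI)
    fix a b assume a: "a \<in> parses X y" and b: "b \<in> parses X y" and e: "?f a = ?f b"
    obtain v z u where a': "a = (v,z,u)" by (cases a) auto
    obtain v' z' u' where b': "b = (v',z',u')" by (cases b) auto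
    have y1: "y = v @ z @ u" and y2: "y = v' @ z' @ u'" using a b a' b' by (auto simp: parses_def)
    have lv: "length v = length v'" using e a' b' by simp
    have vv: "v = v'" using y1 y2 lv by (metis append_eq_append_conv)
    then have zu: "z @ u = z' @ u'" using y1 y2 by simp
    obtain ws1 where w1: "z = concat ws1" "set ws1 \<subseteq> X" using a a' by (auto simp: parses_def star_words_def)
    obtain ws2 where w2: "z' = concat ws2" "set ws2 \<subseteq> X" using b b' by (auto simp: parses_def star_words_def)
    have "z = z'" using noXpref_unique[OF bc w1(2) w2(2), of u u'] zu w1 w2 a a' b b'
      by (auto simp: parses_def)
    then show "a = b" using a' b' vv zu by simp
  qed
  have sub: "?f ` parses X y \<subseteq> noin X y"
  proof
    fix n assume "n \<in> ?f ` parses X y"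
    then obtain v z u where p: "(v,z,u) \<in> parses X y" and n: "n = length v" by auto
    have y: "y = v @ z @ u" and ns: "\<forall>s. suffix s v \<longrightarrow> s \<notin> X" using p by (auto simp: parses_def)
    have "take n y = v" using y n by simp
    then show "n \<in> noin X y" using ns y n by (auto simp: noin_def suffix_drop)
  qed
  have "finite (noin X y)" by (rule finite_subset[of _ "{0..length y}"]) (auto simp: noin_def)
  then show ?thesis unfolding delta_def using card_inj_on_le[OF inj sub] by simp
qed

lemma BND:
  assumes mb: "maximal_bifix_code A X" and wnf: "\<forall>z\<in>X. \<not> sublist w z" and wne: "w \<noteq> []"
    and wA: "w \<in> lists A" and yA: "y \<in> lists A"
  shows "card (noin X y) \<le> Suc (length w)"
proof -
  have bc: "bifix_code A X" using mb by (simp add: maximal_bifix_code_def)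
  have fo: "finite (noout X z)" for z by (rule finite_subset[of _ "{0..length z}"]) (auto simp: noout_def)
  have "(\<lambda>q. q + length w) ` noout X y \<subseteq> noout X (w @ y)"
  proof
    fix q' assume "q' \<in> (\<lambda>q. q + length w) ` noout X y"
    then obtain q where q: "q \<in> noout X y" and q': "q' = q + length w" by auto
    show "q' \<in> noout X (w @ y)"
    proof (rule ccontr)
      assume "q' \<notin> noout X (w @ y)"
      then obtain t where t: "q' < t" "t \<le> length (w @ y)" "drop q' (take t (w @ y)) \<in> X"
        using q q' by (auto simp: noout_def)
      have "take t (w @ y) = w @ take (t - length w) y" using t q' by simp
      then have "drop q' (take t (w @ y)) = drop q (take (t - length w) y)" using q' by simp
      then show False using q t q' by (auto simp: noout_def)
    qed
  qed
  then have "card (noout X y) \<le> card (noout X (w @ y))"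
    using card_inj_on_le[of "\<lambda>q. q + length w"] fo by (auto simp: inj_on_def)
  moreover have "noin X (w @ y) \<subseteq> {0..length w}"
  proof
    fix p assume p: "p \<in> noin X (w @ y)"
    show "p \<in> {0..length w}"
    proof (rule ccontr)
      assume "p \<notin> {0..length w}"
      then have pl: "length w < p" by auto
      have tk: "take p (w @ y) = w @ take (p - length w) y" using pl by simp
      have "take p (w @ y) \<in> lists A" unfolding tk using wA yA
        by (auto simp: in_lists_conv_set dest: in_set_takeD)
      moreover have "sublist w (take p (w @ y))" unfolding tk by simp
      ultimately obtain s where s: "suffix s (take p (w @ y))" "s \<in> X"
        using KEY[OF mb wnf wne] by blast
      have sne: "s \<noteq> []" using s(2) bc by (auto simp: bifix_code_def)
      have "p \<le> length (w @ y)" using p unfolding noin_def by blast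
      then have lt: "length (take p (w @ y)) = p" by simp
      have "s = drop (p - length s) (take p (w @ y))"
        using suffix_drop_eq[OF s(1)] unfolding lt by (rule sym)
      moreover have "p - length s < p" using sne pl by simp
      ultimately show False using p s(2) by (auto simp: noin_def)
    qed
  qed
  then have "card (noin X (w @ y)) \<le> Suc (length w)"
    using card_mono[of "{0..length w}"] by fastforce
  ultimately show ?thesis using EQ[OF bc, of y] EQ[OF bc, of "w @ y"] by simp
qed



definition branch :: "'a list set \<Rightarrow> 'a list \<Rightarrow> bool" where
  "branch S b \<longleftrightarrow> (\<exists>s1\<in>S. \<exists>s2\<in>S. \<exists>c1 c2. c1 \<noteq> c2 \<and> prefix (b @ [c1]) s1 \<and> prefix (b @ [c2]) s2)"

lemma prefix_len_eq: "prefix a b \<Longrightarrow> length b \<le> length a \<Longrightarrow> a = b"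
  by (auto simp: prefix_def)

lemma tree_count:
  "finite B \<Longrightarrow> card B = n \<Longrightarrow> finite S \<Longrightarrow> S \<noteq> {} \<Longrightarrow> (\<forall>s1\<in>S. \<forall>s2\<in>S. prefix s1 s2 \<longrightarrow> s1 = s2)
   \<Longrightarrow> (\<forall>b\<in>B. branch S b) \<Longrightarrow> card B + 1 \<le> card S"
proof (induction n arbitrary: B S)
  case 0
  then show ?case by (simp add: Suc_leI card_gt_0_iff)
next
  case (Suc n)
  have Bne: "B \<noteq> {}" using Suc.prems(2) by auto
  obtain \<beta> where b: "\<beta> \<in> B" and bmax: "\<forall>b\<in>B. length b \<le> length \<beta>"
  proof -
    have "Max (length ` B) \<in> length ` B" using Bne Suc.prems(1) by (intro Max_in) auto
    then obtain \<beta> where "\<beta> \<in> B" "length \<beta> = Max (length ` B)" by auto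
    moreover have "\<forall>b\<in>B. length b \<le> Max (length ` B)" using Suc.prems(1) by auto
    ultimately show ?thesis using that by auto
  qed
  have pf: "\<forall>s1\<in>S. \<forall>s2\<in>S. prefix s1 s2 \<longrightarrow> s1 = s2" using Suc.prems by blast
  obtain s1 s2 c1 c2 where w: "s1 \<in> S" "s2 \<in> S" "c1 \<noteq> c2" "prefix (\<beta> @ [c1]) s1" "prefix (\<beta> @ [c2]) s2"
    using Suc.prems(6) b unfolding branch_def by blast
  define U where "U = {s\<in>S. prefix \<beta> s}"
  define S' where "S' = insert \<beta> (S - U)"
  have s12: "s1 \<noteq> s2"
  proof
    assume "s1 = s2"
    then have "prefix (\<beta> @ [c1]) (\<beta> @ [c2]) \<or> prefix (\<beta> @ [c2]) (\<beta> @ [c1])"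
      using w prefix_same_cases by metis
    then show False using w(3) by auto
  qed
  have U2: "{s1, s2} \<subseteq> U" using w unfolding U_def by (auto dest: append_prefixD)
  have finU: "finite U" using Suc.prems(3) unfolding U_def by auto
  have cU: "2 \<le> card U" using card_mono[OF finU U2] s12 by simp
  have US: "U \<subseteq> S" unfolding U_def by auto
  have bnot: "\<beta> \<notin> S - U" unfolding U_def by auto
  have cS': "card S' + 1 \<le> card S"
  proof -
    have "card S' = card (S - U) + 1" unfolding S'_def using bnot Suc.prems(3) by simp
    moreover have "card (S - U) = card S - card U" using card_Diff_subset[OF finU US] .
    moreover have "card U \<le> card S" using card_mono[OF Suc.prems(3) US] .
    ultimately show ?thesis using cU by simp
  qed
  have pf': "\<forall>s1\<in>S'. \<forall>s2\<in>S'. prefix s1 s2 \<longrightarrow> s1 = s2"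
  proof (intro ballI impI)
    fix a c assume a: "a \<in> S'" and c: "c \<in> S'" and ac: "prefix a c"
    show "a = c"
    proof (cases "a = \<beta>")
      case True
      then show ?thesis using c ac unfolding S'_def U_def by auto
    next
      case False
      then have aS: "a \<in> S" "\<not> prefix \<beta> a" using a unfolding S'_def U_def by auto
      show ?thesis
      proof (cases "c = \<beta>")
        case True
        then have "prefix a s1" using ac w(4) by (meson append_prefixD prefix_order.order_trans)
        then have "a = s1" using pf aS w(1) by blast
        then show ?thesis using aS w(4) by (meson append_prefixD)
      next
        case False
        then have "c \<in> S" using c unfolding S'_def by auto
        then show ?thesis using pf aS ac by blast
      qed
    qed
  qed
  have br': "\<forall>b'\<in>B - {\<beta>}. branch S' b'"
  proof
    fix b' assume b': "b' \<in> B - {\<beta>}"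
    have adj: "\<exists>t\<in>S'. prefix (b' @ [c]) t" if s: "s \<in> S" "prefix (b' @ [c]) s" for s c
    proof (cases "prefix \<beta> s")
      case False
      then show ?thesis using s unfolding S'_def U_def by auto
    next
      case True
      have "prefix (b' @ [c]) \<beta>"
      proof -
        have "prefix (b' @ [c]) \<beta> \<or> prefix \<beta> (b' @ [c])" using prefix_same_cases s(2) True by blast
        moreover have "\<not> prefix \<beta> b'"
        proof
          assume "prefix \<beta> b'"
          moreover have "length b' \<le> length \<beta>" using bmax b' by auto
          ultimately have "\<beta> = b'" using prefix_len_eq by blast
          then show False using b' by auto
        qed
        ultimately show ?thesis by auto
      qed
      then show ?thesis unfolding S'_def by auto
    qed
    obtain t1 t2 d1 d2 where "t1 \<in> S" "t2 \<in> S" "d1 \<noteq> d2" "prefix (b' @ [d1]) t1" "prefix (b' @ [d2]) t2"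
      using Suc.prems(6) b' unfolding branch_def by blast
    then show "branch S' b'" unfolding branch_def using adj by meson
  qed
  have "card (B - {\<beta>}) + 1 \<le> card S'"
  proof (rule Suc.IH)
    show "finite (B - {\<beta>})" using Suc.prems(1) by auto
    show "card (B - {\<beta>}) = n" using Suc.prems(2) b Suc.prems(1) by simp
    show "finite S'" using Suc.prems(3) unfolding S'_def by auto
    show "S' \<noteq> {}" unfolding S'_def by auto
  qed (use pf' br' in auto)
  then show ?case using cS' Suc.prems(2) b Suc.prems(1) by simp
qed



definition seg :: "(nat \<Rightarrow> 'a) \<Rightarrow> nat \<Rightarrow> nat \<Rightarrow> 'a list" where
  "seg x i j = map x [i..<j]"

lemma length_seg[simp]: "length (seg x i j) = j - i" by (simp add: seg_def)
lemma nth_seg[simp]: "k < j - i \<Longrightarrow> seg x i j ! k = x (i + k)" by (simp add: seg_def)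
lemma take_seg: "take m (seg x i j) = seg x i (min j (i + m))"
  unfolding seg_def take_map by (cases "i + m \<le> j") (auto simp: min_def)
lemma drop_seg: "drop m (seg x i j) = seg x (i + m) j" by (simp add: seg_def drop_map)
lemma seg_snoc: "i \<le> j \<Longrightarrow> seg x i (Suc j) = seg x i j @ [x j]" by (simp add: seg_def)
lemma prefix_seg: "m \<le> p \<Longrightarrow> prefix (seg x j m) (seg x j p)"
proof (cases "m \<le> j")
  case True then show ?thesis by (simp add: seg_def)
next
  case False
  assume "m \<le> p"
  then have "seg x j m = take (m - j) (seg x j p)" using False by (simp add: take_seg min_def)
  then show ?thesis by (metis take_is_prefix)
qed
lemma seg_eqI: "j - i = j' - i' \<Longrightarrow> (\<And>k. k < j - i \<Longrightarrow> x (i + k) = x (i' + k)) \<Longrightarrow> seg x i j = seg x i' j'"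
  by (rule nth_equalityI) auto

lemma seg_in_uniq:
  assumes bc: "bifix_code A X" and a: "seg x j p \<in> X" "seg x j' p \<in> X" "j < p" "j' < p"
  shows "j = j'"
proof -
  have su: "suffix (seg x b p) (seg x a p)" if "a \<le> b" for a b
  proof -
    have "seg x b p = drop (b - a) (seg x a p)" using that by (simp add: drop_seg)
    then show ?thesis by (metis suffix_drop)
  qed
  have "seg x j p = seg x j' p"
  proof (cases "j \<le> j'")
    case True then show ?thesis using bifix_suffix_eq[OF bc a(2) a(1)] su by metis
  next
    case False then show ?thesis using bifix_suffix_eq[OF bc a(1) a(2)] su[of j' j] by simp
  qed
  then have "p - j = p - j'" by (metis length_seg)
  then show ?thesis using a by simp
qed

lemma seg_out_uniq:
  assumes bc: "bifix_code A X" and a: "seg x j p \<in> X" "seg x j p' \<in> X" "j < p" "j < p'"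
  shows "p = p'"
proof -
  have "seg x j p = seg x j p'"
  proof (cases "p \<le> p'")
    case True then show ?thesis using bifix_prefix_eq[OF bc a(1) a(2)] prefix_seg by metis
  next
    case False
    then have "prefix (seg x j p') (seg x j p)" by (intro prefix_seg) simp
    then show ?thesis using bifix_prefix_eq[OF bc a(2) a(1)] by simp
  qed
  then have "p - j = p' - j" by (metis length_seg)
  then show ?thesis using a by simp
qed

theorem mainTheorem13:
  fixes A :: "'a set" and X :: "'a list set" and x :: "nat \<Rightarrow> 'a"
  assumes "finite A"
    and "maximal_bifix_code A X" and "thin A X"
    and "\<forall>i. x i \<in> A"
    and "X_stable X x"
    and "ecard (X \<inter> factors x) \<le> degF X x"
  shows "ultimately_periodic x"
proof (rule ccontr)
  note finA = assms(1) and mb = assms(2) and th = assms(3) and xA = assms(4)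
    and st = assms(5) and hc = assms(6)
  assume nup: "\<not> ultimately_periodic x"
  have bc: "bifix_code A X" using mb by (simp add: maximal_bifix_code_def)
  have Xne: "X \<noteq> {}"
  proof
    assume X0: "X = {}"
    have "bifix_code A {[x 0]}" using xA by (auto simp: bifix_code_def strict_prefix_def strict_suffix_def)
    then have "{[x 0]} = X" using mb X0 unfolding maximal_bifix_code_def by blast
    then show False using X0 by auto
  qed
  obtain w where wA: "w \<in> lists A" and wnf: "\<forall>z\<in>X. \<not> sublist w z" using th by (auto simp: thin_def)
  have wne: "w \<noteq> []" using wnf Xne by auto
  have segA: "seg x i j \<in> lists A" for i j using xA by (auto simp: seg_def)
  define arc where "arc j p \<longleftrightarrow> j < p \<and> seg x j p \<in> X" for j p
  have in_uniq: "j = j'" if "arc j p" "arc j' p" for j j' p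
    using seg_in_uniq[OF bc] that unfolding arc_def by blast
  have out_uniq: "p = p'" if "arc j p" "arc j p'" for j p p'
    using seg_out_uniq[OF bc] that unfolding arc_def by blast
  have noin_seg0: "noin X (seg x 0 n) = {p. p \<le> n \<and> \<not> (\<exists>j<p. arc j p)}" for n
    unfolding noin_def arc_def by (auto simp: take_seg drop_seg min_def)
  have bnd: "card {p. p \<le> n \<and> \<not> (\<exists>j<p. arc j p)} \<le> Suc (length w)" for n
    using BND[OF mb wnf wne wA segA] noin_seg0 by metis
  have finNI: "finite {p. \<not> (\<exists>j<p. arc j p)}"
  proof (rule ccontr)
    assume inf: "infinite {p. \<not> (\<exists>j<p. arc j p)}"
    obtain F where F: "F \<subseteq> {p. \<not> (\<exists>j<p. arc j p)}" "finite F" "card F = Suc (Suc (length w))"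
      using infinite_arbitrarily_large[OF inf] by blast
    have "F \<subseteq> {p. p \<le> Max F \<and> \<not> (\<exists>j<p. arc j p)}" using F by auto
    then have "card F \<le> card {p. p \<le> Max F \<and> \<not> (\<exists>j<p. arc j p)}"
      by (rule card_mono[rotated]) (rule finite_subset[of _ "{..Max F}"], auto)
    then show False using bnd[of "Max F"] F by simp
  qed
  obtain N0 where N0: "\<forall>p\<ge>N0. \<exists>j<p. arc j p"
  proof -
    obtain k where "\<forall>n\<in>{p. \<not> (\<exists>j<p. arc j p)}. n \<le> k"
      using finNI finite_nat_set_iff_bounded_le by blast
    note kb = this
    have "\<forall>p\<ge>Suc k. \<exists>j<p. arc j p"
    proof (intro allI impI)
      fix p :: nat assume pk: "Suc k \<le> p"
      show "\<exists>j<p. arc j p"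
      proof (rule ccontr)
        assume "\<not> (\<exists>j<p. arc j p)"
        then have "p \<le> k" using kb by blast
        then show False using pk by simp
      qed
    qed
    then show ?thesis using that by blast
  qed
  obtain sfun where sfun: "\<forall>p\<ge>N0. sfun p < p \<and> arc (sfun p) p"
    using N0 by metis
  define C where "C i = {j. j < i \<and> (\<exists>p\<ge>i. arc j p)}" for i
  have finC: "finite (C i)" for i by (rule finite_subset[of _ "{..<i}"]) (auto simp: C_def)
  have step: "card (C (Suc i)) + 1 = card (C i) + (if \<exists>p. arc i p then 1 else 0)" if Ni: "N0 \<le> i" for i
  proof -
    obtain j0 where j0: "j0 < i" "arc j0 i" using N0 Ni by blast
    define D where "D = {j. j < i \<and> (\<exists>p\<ge>Suc i. arc j p)}"
    have finD: "finite D" by (rule finite_subset[of _ "{..<i}"]) (auto simp: D_def)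
    have Ci: "C i = insert j0 D"
    proof
      show "C i \<subseteq> insert j0 D"
      proof
        fix j assume "j \<in> C i"
        then obtain p where p: "j < i" "i \<le> p" "arc j p" by (auto simp: C_def)
        show "j \<in> insert j0 D"
        proof (cases "p = i")
          case True then show ?thesis using in_uniq j0(2) p(3) by auto
        next
          case False then show ?thesis using p by (auto simp: D_def)
        qed
      qed
      show "insert j0 D \<subseteq> C i" using j0 by (auto simp: C_def D_def intro: Suc_leD)
    qed
    have j0D: "j0 \<notin> D"
    proof
      assume "j0 \<in> D"
      then obtain p where pp: "Suc i \<le> p" "arc j0 p" by (auto simp: D_def)
      have "i = p" using out_uniq[OF j0(2) pp(2)] .
      then show False using pp(1) by simp
    qed
    have CSi: "C (Suc i) = (if \<exists>p. arc i p then insert i D else D)"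
      by (auto simp: C_def D_def arc_def less_Suc_eq Suc_le_eq)
    have iD: "i \<notin> D" by (simp add: D_def)
    show ?thesis unfolding CSi Ci using finD j0D iD by simp
  qed
  have mono: "card (C (Suc i)) \<le> card (C i)" if "N0 \<le> i" for i
    using step[OF that] by (auto split: if_splits)
  obtain N1 where N1: "N0 \<le> N1" "\<forall>i. N0 \<le> i \<longrightarrow> card (C N1) \<le> card (C i)"
    using ex_has_least_nat[of "\<lambda>i. N0 \<le> i" N0 "\<lambda>i. card (C i)"] by auto
  define M where "M = card (C N1)"
  have decr: "card (C i) \<le> M" if "N1 \<le> i" for i
    using that
  proof (induction i rule: dec_induct)
    case base then show ?case by (simp add: M_def)
  next
    case (step k) then show ?case using mono[of k] N1(1) by simp
  qed
  have CM: "card (C i) = M" if "N1 \<le> i" for i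
    using decr[OF that] N1 that unfolding M_def by (meson le_antisym le_trans)
  have hasout: "\<exists>p. arc i p" if "N1 \<le> i" for i
  proof (rule ccontr)
    assume "\<not> (\<exists>p. arc i p)"
    then have "card (C (Suc i)) + 1 = card (C i)" using step[of i] N1(1) that by simp
    then show False using CM[of i] CM[of "Suc i"] that by simp
  qed
  have dM: "delta X (seg x i (i + n)) \<le> M" if "N1 \<le> i" for i n
  proof -
    have "delta X (seg x i (i+n)) \<le> card (noin X (seg x i (i+n)))" by (rule delta_le_noin[OF bc])
    also have "card (noin X (seg x i (i+n))) \<le> card (C i)"
    proof (rule card_inj_on_le[where f = "\<lambda>p. sfun (i + p)"])
      show "inj_on (\<lambda>p. sfun (i+p)) (noin X (seg x i (i+n)))"
      proof (rule inj_onI)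
        fix p1 p2 assume "sfun (i + p1) = sfun (i + p2)"
        moreover have "arc (sfun (i+p1)) (i+p1)" "arc (sfun (i+p2)) (i+p2)"
          using sfun N1(1) that by auto
        ultimately have "i + p1 = i + p2" using out_uniq by metis
        then show "p1 = p2" by simp
      qed
      show "(\<lambda>p. sfun (i+p)) ` noin X (seg x i (i+n)) \<subseteq> C i"
      proof
        fix s assume "s \<in> (\<lambda>p. sfun (i+p)) ` noin X (seg x i (i+n))"
        then obtain p where p: "p \<in> noin X (seg x i (i+n))" and s: "s = sfun (i + p)" by auto
        have pn: "p \<le> n" and np: "\<forall>j<p. drop j (take p (seg x i (i+n))) \<notin> X"
          using p unfolding noin_def by auto
        have a: "s < i + p" "arc s (i + p)" using sfun N1(1) that s by auto
        have "s < i"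
        proof (rule ccontr)
          assume "\<not> s < i"
          then have "s - i < p" "drop (s - i) (take p (seg x i (i+n))) = seg x s (i + p)"
            using a pn by (auto simp: take_seg drop_seg min_def)
          then show False using np a(2) unfolding arc_def by metis
        qed
        then show "s \<in> C i" using a unfolding C_def by (auto intro!: exI[of _ "i + p"])
      qed
    qed (rule finC)
    also have "\<dots> = M" using CM that by simp
    finally show ?thesis .
  qed
  have degle: "degF X x \<le> enat M"
  proof -
    have "degF X x = degF X (\<lambda>k. x (k + N1))" using st unfolding X_stable_def by metis
    also have "\<dots> \<le> enat M"
      unfolding degF_def
    proof (rule SUP_least)
      fix u assume "u \<in> factors (\<lambda>k. x (k + N1))"
      then obtain i n where u: "u = map (\<lambda>k. x (k + N1)) [i..<i+n]" by (auto simp: factors_def)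
      have "u = seg x (i + N1) (i + N1 + n)" unfolding u seg_def by (rule nth_equalityI) (auto simp: add_ac)
      then show "enat (delta X u) \<le> enat M" using dM[of "i+N1" n] by simp
    qed
    finally show ?thesis .
  qed
  define S where "S = X \<inter> factors x"
  have eS: "ecard S \<le> enat M" using hc degle unfolding S_def by (rule order_trans)
  have finS: "finite S" using eS unfolding ecard_def by (auto split: if_splits)
  have cardS: "card S \<le> M" using eS finS unfolding ecard_def by simp
  have segF: "seg x j p \<in> factors x" if "j \<le> p" for j p
    unfolding factors_def seg_def using that by (intro CollectI exI[of _ j] exI[of _ "p - j"]) simp
  have arcS: "seg x j p \<in> S" if "arc j p" for j p using that segF unfolding arc_def S_def by auto
  have Sne: "S \<noteq> {}" using hasout[of N1] arcS by auto
  define L where "L = Max (length ` S)"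
  have arcL: "p - j \<le> L" if "arc j p" for j p
  proof -
    have "length (seg x j p) \<in> length ` S" using arcS[OF that] by (metis image_eqI)
    then show ?thesis unfolding L_def using finS by (metis Max_ge finite_imageI length_seg)
  qed
  have Lpos: "1 \<le> L"
  proof -
    obtain p where "arc N1 p" using hasout by blast
    then show ?thesis using arcL[of N1 p] unfolding arc_def by linarith
  qed
  have pfS: "\<forall>s1\<in>S. \<forall>s2\<in>S. prefix s1 s2 \<longrightarrow> s1 = s2"
    using bifix_prefix_eq[OF bc] unfolding S_def by blast
  have rs: "\<exists>q q'. N1 \<le> q \<and> N1 \<le> q' \<and> (\<forall>k<L. x (q+k) = x (q'+k)) \<and> x (q+L) \<noteq> x (q'+L)"
  proof (rule ccontr)
    assume H0: "\<not> ?thesis"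
    have H: "x (q+L) = x (q'+L)" if "N1 \<le> q" "N1 \<le> q'" "\<forall>k<L. x (q+k) = x (q'+k)" for q q'
      using H0 that by blast
    define W where "W q = seg x q (q + L)" for q
    have Wr: "W ` {N1..} \<subseteq> {l. set l \<subseteq> A \<and> length l = L}" using xA by (auto simp: W_def seg_def)
    have "finite {l. set l \<subseteq> A \<and> length l = L}" using finite_lists_length_eq[OF finA] .
    then have "\<not> inj_on W {N1..}"
      using Wr infinite_Ici[of N1] by (meson finite_imageD finite_subset)
    then obtain q q' where qq: "q \<in> {N1..}" "q' \<in> {N1..}" "q \<noteq> q'" "W q = W q'"
      unfolding inj_on_def by blast
    have "\<exists>a b. N1 \<le> a \<and> a < b \<and> W a = W b"
    proof (cases "q < q'")
      case True then show ?thesis using qq by auto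
    next
      case False then show ?thesis using qq by (intro exI[of _ q'] exI[of _ q]) auto
    qed
    then obtain a b where ab: "N1 \<le> a" "a < b" "W a = W b" by blast
    have win: "x (a+m) = x (b+m)" if "m < L" for m
    proof -
      have "W a ! m = W b ! m" using ab(3) by simp
      then show ?thesis using that unfolding W_def by simp
    qed
    have all: "\<forall>m<L. x (a+k+m) = x (b+k+m)" for k
    proof (induction k)
      case 0 then show ?case using win by simp
    next
      case (Suc k)
      show ?case
      proof (intro allI impI)
        fix m assume m: "m < L"
        show "x (a + Suc k + m) = x (b + Suc k + m)"
        proof (cases "Suc m < L")
          case True then show ?thesis using Suc.IH True by (metis add_Suc_right add_Suc_shift)
        next
          case False
          then have mL: "Suc m = L" using m by simp
          have "x (a + k + L) = x (b + k + L)"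
            using H[of "a+k" "b+k"] Suc.IH ab(1) ab(2) by (simp add: add.assoc)
          then show ?thesis using mL by (metis add_Suc_right add_Suc_shift)
        qed
      qed
    qed
    have per: "x (i + (b - a)) = x i" if "a \<le> i" for i
    proof -
      have "x (a + (i - a) + 0) = x (b + (i - a) + 0)" using all[of "i - a"] Lpos by (metis add_0_right less_le_trans zero_less_one)
      moreover have "b + (i - a) = i + (b - a)" using that ab(2) by simp
      ultimately show ?thesis using that by simp
    qed
    have "ultimately_periodic x" unfolding ultimately_periodic_def
      using per ab(2) by (intro exI[of _ "b - a"] conjI exI[of _ a]) auto
    then show False using nup by simp
  qed
  then obtain q q' where qq: "N1 \<le> q" "N1 \<le> q'" "\<forall>k<L. x (q+k) = x (q'+k)" "x (q+L) \<noteq> x (q'+L)"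
    by blast
  define i where "i = q + L"
  define i' where "i' = q' + L"
  define J where "J = C (Suc i)"
  have cJ: "card J = M" using CM qq(1) unfolding J_def i_def by simp
  have Jprop: "q < j \<and> j \<le> i \<and> (\<exists>p. Suc i \<le> p \<and> arc j p)" if jJ: "j \<in> J" for j
  proof -
    obtain p where p: "j < Suc i" "Suc i \<le> p" "arc j p" using jJ unfolding J_def C_def by auto
    have "p - j \<le> L" using arcL[OF p(3)] .
    then show ?thesis using p unfolding i_def by auto
  qed
  define \<beta> where "\<beta> j = seg x j i" for j
  have injb: "inj_on \<beta> J"
  proof (rule inj_onI)
    fix j1 j2 assume j: "j1 \<in> J" "j2 \<in> J" "\<beta> j1 = \<beta> j2"
    then have "i - j1 = i - j2" unfolding \<beta>_def by (metis length_seg)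
    moreover have "j1 \<le> i" "j2 \<le> i" using Jprop[OF j(1)] Jprop[OF j(2)] by auto
    ultimately show "j1 = j2" by (metis diff_diff_cancel)
  qed
  have brJ: "\<forall>j\<in>J. branch S (\<beta> j)"
  proof
    fix j assume jJ: "j \<in> J"
    obtain p where p: "Suc i \<le> p" "arc j p" and jq: "q < j" "j \<le> i" using Jprop[OF jJ] by blast
    have s1: "seg x j p \<in> S" using arcS p by auto
    have pre1: "prefix (\<beta> j @ [x i]) (seg x j p)"
      unfolding \<beta>_def using seg_snoc[OF jq(2)] prefix_seg[OF p(1)] by metis
    define j' where "j' = q' + (j - q)"
    have j'N: "N1 \<le> j'" using qq(2) by (simp add: j'_def)
    obtain p' where p': "arc j' p'" using hasout[OF j'N] by blast
    have ij: "i' - j' = i - j" using jq unfolding i_def i'_def j'_def by simp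
    have letter: "x (j' + k) = x (j + k)" if "k < i - j" for k
    proof -
      have "j - q + k < L" using that jq unfolding i_def by simp
      then have "x (q + (j - q + k)) = x (q' + (j - q + k))" using qq(3) by blast
      moreover have "q + (j - q + k) = j + k" using jq by simp
      moreover have "q' + (j - q + k) = j' + k" unfolding j'_def by simp
      ultimately show ?thesis by simp
    qed
    have p'gt: "Suc i' \<le> p'"
    proof (rule ccontr)
      assume "\<not> Suc i' \<le> p'"
      then have p'le: "p' \<le> i'" by simp
      define d where "d = p' - j'"
      have d: "0 < d" "d \<le> i - j" using p' p'le ij unfolding d_def arc_def by auto
      have "seg x j (j + d) = seg x j' p'"
        by (rule seg_eqI) (use d letter in \<open>auto simp: d_def\<close>)
      then have "arc j (j + d)" using p' d unfolding arc_def by simp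
      then have "j + d = p" using out_uniq p(2) by blast
      then show False using d p(1) by simp
    qed
    have s2: "seg x j' p' \<in> S" using arcS p' by auto
    have jj': "j' \<le> i'" using jq ij unfolding i'_def j'_def i_def by simp
    have "seg x j i = seg x j' i'"
      by (rule seg_eqI) (use ij letter in auto)
    then have pre2: "prefix (\<beta> j @ [x i']) (seg x j' p')"
      unfolding \<beta>_def using seg_snoc[OF jj'] prefix_seg[OF p'gt] by metis
    show "branch S (\<beta> j)" unfolding branch_def
      using s1 s2 pre1 pre2 qq(4) unfolding i_def i'_def by blast
  qed
  have finJ: "finite J" unfolding J_def by (rule finC)
  have "card (\<beta> ` J) + 1 \<le> card S"
    using tree_count[OF finite_imageI[OF finJ] refl finS Sne pfS] brJ by blast
  moreover have "card (\<beta> ` J) = M" using card_image[OF injb] cJ by simp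
  ultimately show False using cardS by simp
qed


end
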